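(* For any two local decompositions $\Gamma_1,\Gamma_2$ (on the same bipartite system), $\phi(\Gamma_1\cdot\Gamma_2)\le\phi(\Gamma_1)\phi(\Gamma_2)$.
   Context: A local decomposition is a finite set $\Gamma=\{(c_i,V_i\otimes W_i):i\in[m]\}$ with $c_i\in\mathbb{R}$, $V_i\in\mathsf{U}(\mathcal{H}_A)$, $W_i\in\mathsf{U}(\mathcal{H}_B)$. Its magnitude is $\phi(\Gamma)=2\|c\|_1^2-\|c\|_2^2$, viewing $c=(c_i)_{i\in[m]}\in\mathbb{R}^m$. The product of $\Gamma_1=\{(a_i,V^{(1)}_i\otimes W^{(1)}_i):i\in[m_1]\}$ and $\Gamma_2=\{(b_j,V^{(2)}_j\otimes W^{(2)}_j):j\in[m_2]\}$ is $\Gamma_1\cdot\Gamma_2=\{(a_ib_j,V^{(1)}_iV^{(2)}_j\otimes W^{(1)}_iW^{(2)}_j):(i,j)\in[m_1]\times[m_2]\}$, with coefficient vector $(a_ib_j)_{(i,j)}$. *)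

theory Defs
  imports "HOL-Analysis.Analysis"
begin

text \<open>Finite-dimensional Hilbert spaces H_A = complex^'a, H_B = complex^'b;
operators are square complex matrices.\<close>

definition cadjoint :: "complex^'n^'n \<Rightarrow> complex^'n^'n" where
  "cadjoint U = (\<chi> i j. cnj (U $ j $ i))"

definition unitary_mat :: "complex^'n^'n \<Rightarrow> bool" where
  "unitary_mat U \<longleftrightarrow> U ** cadjoint U = mat 1 \<and> cadjoint U ** U = mat 1"

text \<open>A local decomposition indexed by [m]: list of (c_i, V_i, W_i), term c_i V_i \<otimes> W_i.\<close>
type_synonym ('a,'b) local_decomp = "(real \<times> (complex^'a^'a) \<times> (complex^'b^'b)) list"

definition local_decomposition :: "('a::finite,'b::finite) local_decomp \<Rightarrow> bool" where
  "local_decomposition \<Gamma> \<longleftrightarrow> (\<forall>(c,V,W) \<in> set \<Gamma>. unitary_mat V \<and> unitary_mat W)"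

definition coeffs :: "('a::finite,'b::finite) local_decomp \<Rightarrow> real list" where
  "coeffs \<Gamma> = map fst \<Gamma>"

definition magnitude :: "('a::finite,'b::finite) local_decomp \<Rightarrow> real" where
  "magnitude \<Gamma> = 2 * (\<Sum>c\<leftarrow>coeffs \<Gamma>. \<bar>c\<bar>)^2 - (\<Sum>c\<leftarrow>coeffs \<Gamma>. c^2)"

definition decomp_prod :: "('a::finite,'b::finite) local_decomp \<Rightarrow> ('a,'b) local_decomp \<Rightarrow> ('a,'b) local_decomp" where
  "decomp_prod \<Gamma>1 \<Gamma>2 = concat (map (\<lambda>(a,V1,W1). map (\<lambda>(b,V2,W2). (a*b, V1 ** V2, W1 ** W2)) \<Gamma>2) \<Gamma>1)"

end

theory Submission
  imports Defs
begin

lemma prod_sum_aux: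
  fixes f :: "real \<Rightarrow> real"
  assumes fm: "\<And>a b. f (a*b) = f a * f b"
  shows "(\<Sum>c\<leftarrow>coeffs (decomp_prod G1 G2). f c)
         = (\<Sum>c\<leftarrow>coeffs G1. f c) * (\<Sum>c\<leftarrow>coeffs G2. f c)"
proof (induction G1)
  case Nil
  then show ?case by (simp add: coeffs_def decomp_prod_def)
next
  case (Cons x G1)
  obtain a V W where x: "x = (a,V,W)" by (cases x) auto
  have inner: "(\<Sum>c\<leftarrow>map fst (map (\<lambda>(b,V2,W2). (a*b, V ** V2, W ** W2)) G2). f c)
      = f a * (\<Sum>c\<leftarrow>map fst G2. f c)"
    by (induction G2) (auto simp: fm algebra_simps)
  show ?case using Cons inner
    by (simp add: x coeffs_def decomp_prod_def algebra_simps)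
qed

lemma sq_le: "(\<Sum>c\<leftarrow>xs. (c::real)^2) \<le> (\<Sum>c\<leftarrow>xs. \<bar>c\<bar>)^2"
proof (induction xs)
  case Nil then show ?case by simp
next
  case (Cons x xs)
  have "0 \<le> (\<Sum>c\<leftarrow>xs. \<bar>c\<bar>)" by (induction xs) auto
  hence "0 \<le> \<bar>x\<bar> * (\<Sum>c\<leftarrow>xs. \<bar>c\<bar>)" by simp
  then show ?case using Cons by (simp add: power2_eq_square algebra_simps)
qed

theorem lemma2:
  fixes \<Gamma>1 \<Gamma>2 :: "('a::finite,'b::finite) local_decomp"
  assumes "local_decomposition \<Gamma>1" and "local_decomposition \<Gamma>2"
  shows "magnitude (decomp_prod \<Gamma>1 \<Gamma>2) \<le> magnitude \<Gamma>1 * magnitude \<Gamma>2"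
proof -
  define S1 where "S1 = (\<Sum>c\<leftarrow>coeffs \<Gamma>1. \<bar>c\<bar>)"
  define S2 where "S2 = (\<Sum>c\<leftarrow>coeffs \<Gamma>2. \<bar>c\<bar>)"
  define Q1 where "Q1 = (\<Sum>c\<leftarrow>coeffs \<Gamma>1. c^2)"
  define Q2 where "Q2 = (\<Sum>c\<leftarrow>coeffs \<Gamma>2. c^2)"
  have a: "(\<Sum>c\<leftarrow>coeffs (decomp_prod \<Gamma>1 \<Gamma>2). \<bar>c\<bar>) = S1 * S2"
    unfolding S1_def S2_def by (rule prod_sum_aux) (simp add: abs_mult)
  have b: "(\<Sum>c\<leftarrow>coeffs (decomp_prod \<Gamma>1 \<Gamma>2). c^2) = Q1 * Q2"
    unfolding Q1_def Q2_def by (rule prod_sum_aux) (simp add: power_mult_distrib)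
  have h1: "Q1 \<le> S1^2" unfolding Q1_def S1_def by (rule sq_le)
  have h2: "Q2 \<le> S2^2" unfolding Q2_def S2_def by (rule sq_le)
  have "0 \<le> (S1^2 - Q1) * (S2^2 - Q2)" using h1 h2 by simp
  hence "2 * (S1*S2)^2 - Q1*Q2 \<le> (2*S1^2 - Q1) * (2*S2^2 - Q2)"
    by (simp add: algebra_simps power_mult_distrib)
  thus ?thesis unfolding magnitude_def a b S1_def[symmetric] S2_def[symmetric]
      Q1_def[symmetric] Q2_def[symmetric] .
qed

end
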